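(* Let $N\ge1$, $0\le\alpha\le1/L$ and $0\le\beta\le2/L-\alpha$, and run the noisy algorithm with these constant parameters. Then $$\mathbb{E}f(\theta_N)-f(\theta_* )\le\min\Big\{\frac{\|\theta_0-\theta_*\|^2}{\alpha N^2}+\frac{(\alpha N+\beta)^2}{\alpha N}\operatorname{tr}(C),\ \frac{4\|\theta_0-\theta_*\|^2}{(\alpha+\beta)N}+\frac{4(\alpha N+\beta)^2}{\alpha+\beta}\operatorname{tr}(C)\Big\},$$ where a term with zero denominator is interpreted as $+\infty$.
   Context: Let $H\in\mathbb{R}^{d\times d}$ be symmetric positive definite with largest eigenvalue $L$, $q\in\mathbb{R}^d$, $f(\theta)=\frac12\langle\theta,H\theta\rangle-\langle q,\theta\rangle$, $\theta_*=H^{-1}q$. Let $(\varepsilon_n)_{n\ge2}$ be random vectors in $\mathbb{R}^d$ with $\mathbb{E}\varepsilon_n=0$, $\mathbb{E}[\varepsilon_n\varepsilon_m^\top]=0$ for $n\neq m$, and $\mathbb{E}[\varepsilon_n\varepsilon_n^\top]=C$ for all $n$, for a fixed positive semidefinite $C$. The noisy algorithm with parameters $\alpha,\beta$: given deterministic $\theta_0\in\mathbb{R}^d$, set $\theta_1=\theta_0$ and for $n\ge1$ $$\theta_{n+1}=\frac{2n}{n+1}\theta_n-\frac{n-1}{n+1}\theta_{n-1}-\frac{1}{n+1}\Big(n(\alpha+\beta)H(\theta_n-\theta_* )-(n-1)\beta H(\theta_{n-1}-\theta_* )-(n\alpha+\beta)\varepsilon_{n+1}\Big),$$ i.e. the gradient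 $f'(\omega_n)$, $\omega_n=\frac{n(\alpha+\beta)\theta_n-(n-1)\beta\theta_{n-1}}{n\alpha+\beta}$, in the recursion $\theta_{n+1}=\frac{2n}{n+1}\theta_n-\frac{n-1}{n+1}\theta_{n-1}-\frac{n\alpha+\beta}{n+1}f'(\omega_n)$ is replaced by $f'(\omega_n)-\varepsilon_{n+1}$. Equivalently, $\eta_n=n(\theta_n-\theta_* )$ satisfies $\eta_0=0$, $\eta_1=\theta_0-\theta_*$, $\eta_{n+1}=(I-\alpha H)\eta_n+(I-\beta H)(\eta_n-\eta_{n-1})+(n\alpha+\beta)\varepsilon_{n+1}$. *)

theory Defs
  imports "HOL-Analysis.Analysis" "HOL-Probability.Probability"
begin

definition quad_obj :: "real^'d^'d \<Rightarrow> real^'d \<Rightarrow> real^'d \<Rightarrow> real" where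
  "quad_obj H q \<theta> = (1/2) * (\<theta> \<bullet> (H *v \<theta>)) - q \<bullet> \<theta>"

definition largest_eigenvalue :: "real^'d^'d \<Rightarrow> real" where
  "largest_eigenvalue H = Max {c. \<exists>v. v \<noteq> 0 \<and> H *v v = c *\<^sub>R v}"

text \<open>Here ts = theta_*, and the clause for Suc (Suc k) is the step n = k+1.\<close>
fun noisy_theta :: "real^'d^'d \<Rightarrow> real^'d \<Rightarrow> real \<Rightarrow> real \<Rightarrow> real^'d
    \<Rightarrow> (nat \<Rightarrow> real^'d) \<Rightarrow> nat \<Rightarrow> real^'d" where
  "noisy_theta H ts a b th0 e 0 = th0"
| "noisy_theta H ts a b th0 e (Suc 0) = th0"
| "noisy_theta H ts a b th0 e (Suc (Suc k)) =
    (let n = real (Suc k); xn = noisy_theta H ts a b th0 e (Suc k);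
         xp = noisy_theta H ts a b th0 e k in
     (2 * n / (n + 1)) *\<^sub>R xn - ((n - 1) / (n + 1)) *\<^sub>R xp
     - (1 / (n + 1)) *\<^sub>R ((n * (a + b)) *\<^sub>R (H *v (xn - ts))
          - ((n - 1) * b) *\<^sub>R (H *v (xp - ts))
          - (n * a + b) *\<^sub>R e (Suc (Suc k))))"

end

theory Submission
  imports Defs
begin


fun sc :: "real \<Rightarrow> real \<Rightarrow> nat \<Rightarrow> real" where
  "sc a b 0 = 0" | "sc a b (Suc 0) = 1"
| "sc a b (Suc (Suc m)) = (2 - a - b) * sc a b (Suc m) - (1 - b) * sc a b m"

lemma sc_E: "(sc a b (Suc m))^2 - (2 - a - b) * sc a b (Suc m) * sc a b m + (1 - b) * (sc a b m)^2 = (1 - b)^m"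
proof (induction m)
  case 0 then show ?case by simp
next
  case (Suc m)
  define y z where "y = sc a b (Suc m)" and "z = sc a b m"
  have x: "sc a b (Suc (Suc m)) = (2 - a - b) * y - (1 - b) * z" by (simp add: y_def z_def)
  have "(sc a b (Suc (Suc m)))^2 - (2 - a - b) * sc a b (Suc (Suc m)) * sc a b (Suc m) + (1 - b) * (sc a b (Suc m))^2
     = (1 - b) * (y^2 - (2 - a - b) * y * z + (1 - b) * z^2)"
    unfolding x y_def[symmetric] by (simp add: algebra_simps power2_eq_square)
  also have "\<dots> = (1-b)^(Suc m)" using Suc.IH by (simp add: y_def z_def)
  finally show ?case .
qed

lemma sc_bound2:
  assumes a: "0 \<le> a" and b: "0 \<le> b" and ab: "a + b \<le> 2"
  shows "(a + b) * (sc a b m)^2 \<le> 2 * real m"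
proof (induction m)
  case 0 then show ?case by simp
next
  case (Suc m)
  define y z where "y = sc a b (Suc m)" and "z = sc a b m"
  have E: "y^2 - (2 - a - b) * y * z + (1 - b) * z^2 = (1 - b)^m"
    using sc_E[of a b m] by (simp add: y_def z_def)
  have qa: "\<bar>1 - b\<bar> \<le> 1" using a b ab by auto
  have "(1 - b)^m \<le> 1"
    by (metis abs_le_D1 le_cases order.trans power_abs power_le_one abs_ge_zero qa)
  have am: "(2 - a - b) * y * z \<le> (2 - a - b) * (y^2 + z^2) / 2"
  proof -
    have "0 \<le> (2 - a - b) * (y - z)^2" using ab by simp
    then show ?thesis by (simp add: algebra_simps power2_eq_square)
  qed
  have IH: "(a + b) * z^2 \<le> 2 * real m" using Suc.IH by (simp add: z_def)
  have "0 \<le> a * z^2" using a by simp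
  have "(a + b) * y^2 \<le> 2 + (a + b - 2 * a) * z^2"
    using E am \<open>(1 - b)^m \<le> 1\<close> by (simp add: algebra_simps power2_eq_square) 
  then show ?case using IH \<open>0 \<le> a * z^2\<close> by (simp add: y_def algebra_simps)
qed

lemma sc_bound1:
  assumes a: "0 \<le> a" and a1: "a \<le> 1" and b: "0 \<le> b" and ab: "a + b \<le> 2"
  shows "a * (sc a b m)^2 \<le> 2"
proof (cases "a = 0")
  case True then show ?thesis by simp
next
  case False
  hence ap: "0 < a" using a by simp
  define t where "t = a + b"
  define W where "W n = a * (t + a) * (sc a b n)^2 + 2 * a * t * sc a b n * (sc a b (Suc n) - sc a b n)
     + (t + a) * (sc a b (Suc n) - sc a b n)^2" for n
  have step: "W (Suc n) \<le> W n" for n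
  proof -
    define s d where "s = sc a b n" and "d = sc a b (Suc n) - sc a b n"
    have s1: "sc a b (Suc n) = s + d" by (simp add: s_def d_def)
    have s2: "sc a b (Suc (Suc n)) = (2 - t) * (s + d) - (1 - b) * s"
      by (simp add: s_def d_def t_def)
    have "W (Suc n) - W n = - (a^2 * b * s^2) - b * (2 * t + a - t^2) * d^2"
      unfolding W_def s1 s2 s_def[symmetric] by (simp add: t_def algebra_simps power2_eq_square)
    moreover have "0 \<le> a^2 * b * s^2" using b by simp
    moreover have "0 \<le> b * (2 * t + a - t^2) * d^2"
    proof -
      have "0 \<le> t * (2 - t) + a" using a b ab by (simp add: t_def)
      hence "0 \<le> 2 * t + a - t^2" by (simp add: algebra_simps power2_eq_square)
      then show ?thesis using b by simp
    qed
    ultimately show ?thesis by linarith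
  qed
  have mono: "W n \<le> W 0" for n
    by (induction n) (use step order_trans in blast)+
  have W0: "W 0 = t + a" by (simp add: W_def)
  have key: "(t + a) * a * (sc a b n)^2 \<le> 2 * W n" for n
  proof -
    define s d where "s = sc a b n" and "d = sc a b (Suc n) - sc a b n"
    have "(t + a)^2 - 2 * a * t^2 \<ge> 0"
    proof -
      have "0 \<le> a * t" using a b by (simp add: t_def)
      hence "a * t * t \<le> a * t * 2" using ab by (intro mult_left_mono) (auto simp: t_def)
      hence "2 * a * t^2 \<le> 4 * a * t" by (simp add: power2_eq_square algebra_simps)
      moreover have "0 \<le> (t - a)^2" by simp
      ultimately show ?thesis by (simp add: algebra_simps power2_eq_square)
    qed
    hence "0 \<le> a * ((t + a)^2 - 2 * a * t^2) * s^2" using a by simp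
    moreover have "0 \<le> 2 * ((t + a) * d + a * t * s)^2" by simp
    moreover have "(t + a) * (2 * W n - (t + a) * a * s^2) = 2 * ((t + a) * d + a * t * s)^2 + a * ((t + a)^2 - 2 * a * t^2) * s^2"
    proof -
      have s1: "sc a b (Suc n) = s + d" by (simp add: s_def d_def)
      show ?thesis unfolding W_def s1 s_def[symmetric] by (simp add: algebra_simps power2_eq_square)
    qed
    moreover have "0 < t + a" using ap b by (simp add: t_def)
    ultimately have "0 \<le> 2 * W n - (t + a) * a * s^2"
      by (metis add_nonneg_nonneg zero_le_mult_iff not_le)
    then show ?thesis by (simp add: s_def)
  qed
  have "(t + a) * (a * (sc a b m)^2) \<le> (t + a) * 2"
    using key[of m] mono[of m] W0 by (simp add: algebra_simps)
  moreover have "0 < t + a" using ap b by (simp add: t_def)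
  ultimately show ?thesis by (metis mult_le_cancel_left_pos)
qed



lemma sym_inner:
  fixes H :: "real^'n^'n"
  assumes "transpose H = H" shows "x \<bullet> (H *v y) = (H *v x) \<bullet> y"
proof -
  have "x v* H = H *v x" using transpose_matrix_vector[of H x] assms by simp
  then show ?thesis by (metis dot_lmul_matrix)
qed

lemma spectral_aux:
  fixes H :: "real^'n^'n"
  assumes sym: "transpose H = H"
  shows "subspace S \<Longrightarrow> (\<forall>x\<in>S. H *v x \<in> S) \<Longrightarrow> \<exists>B. finite B \<and> B \<subseteq> S \<and> pairwise orthogonal B \<and>
     (\<forall>b\<in>B. norm b = 1 \<and> H *v b = (b \<bullet> (H *v b)) *\<^sub>R b) \<and> S \<subseteq> span B"
proof (induction "dim S" arbitrary: S rule: less_induct)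
  case less
  show ?case
  proof (cases "S \<subseteq> {0}")
    case True
    then show ?thesis by (intro exI[of _ "{}"]) auto
  next
    case False
    then obtain y where y: "y \<in> S" "y \<noteq> 0" by auto
    define K where "K = S \<inter> sphere 0 1"
    have "compact K" unfolding K_def
      using closed_subspace[OF less.prems(1)] compact_sphere by (simp add: closed_Int_compact)
    moreover have "(1 / norm y) *\<^sub>R y \<in> K"
      using y less.prems(1) by (simp add: K_def subspace_scale)
    hence "K \<noteq> {}" by auto
    moreover have "continuous_on K (\<lambda>x. x \<bullet> (H *v x))"
      by (intro continuous_intros continuous_on_compose2[of UNIV "(*v) H"] linear_continuous_on) auto
    ultimately obtain x where x: "x \<in> K" and xmax: "\<And>z. z \<in> K \<Longrightarrow> z \<bullet> (H *v z) \<le> x \<bullet> (H *v x)"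
      using continuous_attains_sup[of K "\<lambda>x. x \<bullet> (H *v x)"] by blast
    define l where "l = x \<bullet> (H *v x)"
    have xS: "x \<in> S" and nx: "norm x = 1" using x by (auto simp: K_def)
    have xx: "x \<bullet> x = 1" using nx by (simp add: norm_eq_sqrt_inner)
    have ray: "z \<bullet> (H *v z) \<le> l * (z \<bullet> z)" if "z \<in> S" for z
    proof (cases "z = 0")
      case True then show ?thesis by simp
    next
      case False
      define z' where "z' = (1 / norm z) *\<^sub>R z"
      have "z' \<in> K" using that False less.prems(1) by (simp add: K_def z'_def subspace_scale)
      hence "z' \<bullet> (H *v z') \<le> l" using xmax l_def by auto
      moreover have "z' \<bullet> (H *v z') = (z \<bullet> (H *v z)) / (norm z)^2"
        by (simp add: z'_def matrix_vector_mult_scaleR power2_eq_square)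
      moreover have "z \<bullet> z = (norm z)^2" by (simp add: power2_norm_eq_inner)
      moreover have "0 < (norm z)^2" using False by simp
      ultimately show ?thesis by (simp add: divide_le_eq mult.commute)
    qed
    define w where "w = H *v x - l *\<^sub>R x"
    have wS: "w \<in> S" using less.prems xS by (simp add: w_def subspace_diff subspace_scale)
    have w0: "w = 0"
    proof (rule ccontr)
      assume "w \<noteq> 0"
      hence wp: "0 < w \<bullet> w" by simp
      define c where "c = l * (w \<bullet> w) - w \<bullet> (H *v w)"
      have c0: "0 \<le> c" using ray[OF wS] by (simp add: c_def)
      define r where "r = (w \<bullet> w) / (c + 1)"
      have rp: "0 < r" using wp c0 by (simp add: r_def)
      have "x + r *\<^sub>R w \<in> S" using less.prems xS wS by (simp add: subspace_add subspace_scale)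
      from ray[OF this]
      have "(x + r *\<^sub>R w) \<bullet> (H *v (x + r *\<^sub>R w)) \<le> l * ((x + r *\<^sub>R w) \<bullet> (x + r *\<^sub>R w))" .
      moreover have "(x + r *\<^sub>R w) \<bullet> (H *v (x + r *\<^sub>R w)) = l + 2 * r * (w \<bullet> (H *v x)) + r^2 * (w \<bullet> (H *v w))"
        using sym_inner[OF sym, of x w] sym_inner[OF sym, of w w]
        by (simp add: matrix_vector_right_distrib matrix_vector_mult_scaleR inner_add_left inner_add_right
              l_def algebra_simps power2_eq_square inner_commute)
      moreover have "l * ((x + r *\<^sub>R w) \<bullet> (x + r *\<^sub>R w)) = l + 2 * r * l * (w \<bullet> x) + r^2 * l * (w \<bullet> w)"
        using xx by (simp add: inner_add_left inner_add_right algebra_simps power2_eq_square inner_commute)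
      moreover have "w \<bullet> (H *v x) = l * (w \<bullet> x) + w \<bullet> w"
        by (simp add: w_def inner_diff_right algebra_simps)
      ultimately have "2 * r * (w \<bullet> w) \<le> r^2 * c"
        by (simp add: c_def algebra_simps)
      hence "2 * (w \<bullet> w) \<le> r * c" using rp by (simp add: power2_eq_square)
      moreover have "r * c < w \<bullet> w"
      proof -
        have "r * c = (w \<bullet> w) * (c / (c + 1))" by (simp add: r_def)
        also have "\<dots> < (w \<bullet> w) * 1" using wp c0 by (intro mult_strict_left_mono) auto
        finally show ?thesis by simp
      qed
      ultimately show False using wp by linarith
    qed
    have Hx: "H *v x = l *\<^sub>R x" using w0 by (simp add: w_def)
    define S' where "S' = S \<inter> {z. orthogonal x z}"
    have sS': "subspace S'" unfolding S'_def
      using less.prems(1) subspace_orthogonal_to_vector[of x] by (intro subspace_inter) auto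
    have invS': "\<forall>z\<in>S'. H *v z \<in> S'"
    proof
      fix z assume "z \<in> S'"
      hence "z \<in> S" "x \<bullet> z = 0" by (auto simp: S'_def orthogonal_def)
      moreover have "x \<bullet> (H *v z) = l * (x \<bullet> z)"
        using sym_inner[OF sym, of x z] Hx by simp
      ultimately show "H *v z \<in> S'" using less.prems(2) by (simp add: S'_def orthogonal_def)
    qed
    have "dim S' < dim S"
    proof -
      have "x \<notin> S'" using xx by (auto simp: S'_def orthogonal_def)
      hence "S' \<subset> S" using xS by (auto simp: S'_def)
      then show ?thesis using sS' less.prems(1) by (metis dim_psubset span_eq_iff)
    qed
    from less.hyps[OF this sS' invS'] obtain B' where B': "finite B'" "B' \<subseteq> S'" "pairwise orthogonal B'"
      "\<forall>b\<in>B'. norm b = 1 \<and> H *v b = (b \<bullet> (H *v b)) *\<^sub>R b" "S' \<subseteq> span B'" by blast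
    show ?thesis
    proof (intro exI[of _ "insert x B'"] conjI)
      show "finite (insert x B')" using B' by simp
      show "insert x B' \<subseteq> S" using B' xS by (auto simp: S'_def)
      show "pairwise orthogonal (insert x B')"
        using B'(2,3) by (auto simp: pairwise_insert S'_def orthogonal_commute)
      show "\<forall>b\<in>insert x B'. norm b = 1 \<and> H *v b = (b \<bullet> (H *v b)) *\<^sub>R b"
        using B'(4) nx Hx xx by (simp add: l_def)
      show "S \<subseteq> span (insert x B')"
      proof
        fix z assume zS: "z \<in> S"
        have "z - (x \<bullet> z) *\<^sub>R x \<in> S'"
          using zS xS less.prems(1) xx
          by (simp add: S'_def orthogonal_def subspace_diff subspace_scale inner_diff_right)
        hence "z - (x \<bullet> z) *\<^sub>R x \<in> span (insert x B')"
          using B'(5) span_mono[of B' "insert x B'"] by auto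
        moreover have "(x \<bullet> z) *\<^sub>R x \<in> span (insert x B')" by (simp add: span_base span_scale)
        ultimately have "z - (x \<bullet> z) *\<^sub>R x + (x \<bullet> z) *\<^sub>R x \<in> span (insert x B')" by (rule span_add)
        then show "z \<in> span (insert x B')" by simp
      qed
    qed
  qed
qed

lemma ortho_inner_sum:
  fixes B :: "(real^'n) set"
  assumes "finite B" "pairwise orthogonal B" "\<forall>b\<in>B. norm b = 1" "b0 \<in> B"
  shows "(\<Sum>b\<in>B. f b *\<^sub>R b) \<bullet> b0 = f b0"
proof -
  have "(\<Sum>b\<in>B. f b *\<^sub>R b) \<bullet> b0 = (\<Sum>b\<in>B. f b * (b \<bullet> b0))"
    by (simp add: inner_sum_left)
  also have "\<dots> = (\<Sum>b\<in>B. if b = b0 then f b else 0)"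
  proof (rule sum.cong)
    fix b assume "b \<in> B"
    show "f b * (b \<bullet> b0) = (if b = b0 then f b else 0)"
    proof (cases "b = b0")
      case True
      then have "b \<bullet> b0 = 1" using assms(3,4) by (simp add: norm_eq_sqrt_inner)
      then show ?thesis using True by simp
    next
      case False
      then have "b \<bullet> b0 = 0" using assms(2,4) \<open>b \<in> B\<close> by (auto simp: pairwise_def orthogonal_def)
      then show ?thesis using False by simp
    qed
  qed simp
  also have "\<dots> = f b0" using assms(1,4) by (simp add: sum.delta')
  finally show ?thesis .
qed

lemma ortho_inner_sums:
  fixes B :: "(real^'n) set"
  assumes "finite B" "pairwise orthogonal B" "\<forall>b\<in>B. norm b = 1"
  shows "(\<Sum>b\<in>B. f b *\<^sub>R b) \<bullet> (\<Sum>b\<in>B. g b *\<^sub>R b) = (\<Sum>b\<in>B. f b * g b)"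
proof -
  have "(\<Sum>b\<in>B. f b *\<^sub>R b) \<bullet> (\<Sum>b\<in>B. g b *\<^sub>R b) = (\<Sum>b\<in>B. g b * ((\<Sum>b\<in>B. f b *\<^sub>R b) \<bullet> b))"
    by (simp add: inner_sum_right)
  also have "\<dots> = (\<Sum>b\<in>B. g b * f b)"
    by (rule sum.cong) (use ortho_inner_sum[OF assms] in auto)
  finally show ?thesis by (simp add: mult.commute)
qed

lemma spectral:
  fixes H :: "real^'n^'n"
  assumes "transpose H = H"
  obtains B where "finite B" "pairwise orthogonal B"
    "\<forall>b\<in>B. norm b = 1 \<and> H *v b = (b \<bullet> (H *v b)) *\<^sub>R b"
    "\<And>v. v = (\<Sum>b\<in>B. (v \<bullet> b) *\<^sub>R b)"
proof -
  obtain B where B: "finite B" "pairwise orthogonal B"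
    "\<forall>b\<in>B. norm b = 1 \<and> H *v b = (b \<bullet> (H *v b)) *\<^sub>R b" "UNIV \<subseteq> span B"
    using spectral_aux[OF assms, of UNIV] by auto
  have "v = (\<Sum>b\<in>B. (v \<bullet> b) *\<^sub>R b)" for v
  proof -
    have "v \<in> span B" using B(4) by auto
    then obtain c where c: "v = (\<Sum>b\<in>B. c b *\<^sub>R b)" using span_finite[OF B(1)] by auto
    have "v \<bullet> b = c b" if "b \<in> B" for b
      unfolding c using ortho_inner_sum[OF B(1,2) _ that, of c] B(3) by auto
    then show ?thesis by (subst c) (auto intro: sum.cong)
  qed
  then show ?thesis using that B by blast
qed

lemma quad_bound:
  fixes H :: "real^'n^'n" and u :: "real^'n \<Rightarrow> real^'n"
  assumes B: "finite B" "pairwise orthogonal B"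
    "\<forall>b\<in>B. norm b = 1 \<and> H *v b = (b \<bullet> (H *v b)) *\<^sub>R b"
    "\<And>v. v = (\<Sum>b\<in>B. (v \<bullet> b) *\<^sub>R b)"
    and lin: "linear u" and eig: "\<And>b. b \<in> B \<Longrightarrow> u b = \<sigma> b *\<^sub>R b"
    and K: "\<And>b. b \<in> B \<Longrightarrow> (b \<bullet> (H *v b)) * (\<sigma> b)^2 \<le> K"
  shows "u v \<bullet> (H *v u v) \<le> K * (v \<bullet> v)"
proof -
  have nb: "\<forall>b\<in>B. norm b = 1" using B(3) by auto
  have uv: "u v = (\<Sum>b\<in>B. ((v \<bullet> b) * \<sigma> b) *\<^sub>R b)"
  proof -
    have "u v = u (\<Sum>b\<in>B. (v \<bullet> b) *\<^sub>R b)" using B(4)[of v] by simp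
    also have "\<dots> = (\<Sum>b\<in>B. (v \<bullet> b) *\<^sub>R u b)" by (simp add: linear_sum[OF lin] linear_scale[OF lin])
    also have "\<dots> = (\<Sum>b\<in>B. ((v \<bullet> b) * \<sigma> b) *\<^sub>R b)" by (rule sum.cong) (auto simp: eig)
    finally show ?thesis .
  qed
  have Huv: "H *v u v = (\<Sum>b\<in>B. ((v \<bullet> b) * \<sigma> b * (b \<bullet> (H *v b))) *\<^sub>R b)"
  proof -
    have "H *v u v = (\<Sum>b\<in>B. ((v \<bullet> b) * \<sigma> b) *\<^sub>R (H *v b))"
      unfolding uv by (simp add: linear_sum[OF matrix_vector_mul_linear] matrix_vector_mult_scaleR)
    also have "\<dots> = (\<Sum>b\<in>B. ((v \<bullet> b) * \<sigma> b * (b \<bullet> (H *v b))) *\<^sub>R b)"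
    proof (rule sum.cong)
      fix b assume "b \<in> B"
      then have e: "H *v b = (b \<bullet> (H *v b)) *\<^sub>R b" using B(3) by auto
      show "((v \<bullet> b) * \<sigma> b) *\<^sub>R (H *v b) = ((v \<bullet> b) * \<sigma> b * (b \<bullet> (H *v b))) *\<^sub>R b"
        by (subst e) simp
    qed simp
    finally show ?thesis .
  qed
  have "u v \<bullet> (H *v u v) = (\<Sum>b\<in>B. ((v \<bullet> b) * \<sigma> b) *\<^sub>R b) \<bullet> (\<Sum>b\<in>B. ((v \<bullet> b) * \<sigma> b * (b \<bullet> (H *v b))) *\<^sub>R b)"
    by (simp only: Huv) (simp only: uv)
  also have "\<dots> = (\<Sum>b\<in>B. (v \<bullet> b)^2 * ((b \<bullet> (H *v b)) * (\<sigma> b)^2))"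
    unfolding ortho_inner_sums[OF B(1,2) nb] by (rule sum.cong) (auto simp: power2_eq_square)
  also have "\<dots> \<le> (\<Sum>b\<in>B. (v \<bullet> b)^2 * K)"
    by (rule sum_mono) (auto intro: mult_left_mono K)
  also have "\<dots> = K * (v \<bullet> v)"
  proof -
    have "v \<bullet> v = (\<Sum>b\<in>B. (v \<bullet> b) *\<^sub>R b) \<bullet> (\<Sum>b\<in>B. (v \<bullet> b) *\<^sub>R b)" using B(4)[of v] by simp
    also have "\<dots> = (\<Sum>b\<in>B. (v \<bullet> b)^2)" by (simp add: ortho_inner_sums[OF B(1,2) nb] power2_eq_square)
    finally show ?thesis by (simp add: sum_distrib_left mult.commute)
  qed
  finally show ?thesis .
qed



fun uu :: "real^'d^'d \<Rightarrow> real \<Rightarrow> real \<Rightarrow> nat \<Rightarrow> real^'d \<Rightarrow> real^'d" where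
  "uu H a b 0 v = 0" | "uu H a b (Suc 0) v = v"
| "uu H a b (Suc (Suc m)) v = 2 *\<^sub>R uu H a b (Suc m) v - uu H a b m v
     - (a + b) *\<^sub>R (H *v uu H a b (Suc m) v) + b *\<^sub>R (H *v uu H a b m v)"

lemma uu_addscale: "uu H a b m (x + y) = uu H a b m x + uu H a b m y \<and> uu H a b m (c *\<^sub>R x) = c *\<^sub>R uu H a b m x"
proof -
  have "(uu H a b m (x + y) = uu H a b m x + uu H a b m y \<and> uu H a b m (c *\<^sub>R x) = c *\<^sub>R uu H a b m x) \<and>
        (uu H a b (Suc m) (x + y) = uu H a b (Suc m) x + uu H a b (Suc m) y \<and> uu H a b (Suc m) (c *\<^sub>R x) = c *\<^sub>R uu H a b (Suc m) x)"
  proof (induction m)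
    case 0 then show ?case by simp
  next
    case (Suc m)
    then show ?case by (simp add: algebra_simps matrix_vector_mult_scaleR)
  qed
  then show ?thesis by simp
qed

lemma uu_linear: "linear (uu H a b m)"
  by (rule linearI) (simp_all add: uu_addscale)

lemma uu_eigen:
  assumes "H *v w = l *\<^sub>R w"
  shows "uu H a b m w = sc (a * l) (b * l) m *\<^sub>R w"
proof -
  have "uu H a b m w = sc (a * l) (b * l) m *\<^sub>R w \<and> uu H a b (Suc m) w = sc (a * l) (b * l) (Suc m) *\<^sub>R w"
  proof (induction m)
    case 0 then show ?case by simp
  next
    case (Suc m)
    then show ?case
      by (simp add: matrix_vector_mult_scaleR assms algebra_simps)
  qed
  then show ?thesis by simp
qed

lemma theta_aux:
  fixes n a b X1 X0 T HX1 HX0 HT E :: real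
  assumes "n + 1 \<noteq> 0"
  shows "(n+1) * ((2*n/(n+1))*X1 - ((n-1)/(n+1))*X0 - (1/(n+1))*((n*(a+b))*(HX1 - HT) - ((n-1)*b)*(HX0 - HT) - (n*a+b)*E) - T)
   = 2*n*(X1 - T) - (n-1)*(X0-T) - (a+b)*n*(HX1-HT) + b*(n-1)*(HX0 - HT) + (n*a+b)*E"
proof -
  have "(n+1) * ((2*n/(n+1))*X1 - ((n-1)/(n+1))*X0 - (1/(n+1))*((n*(a+b))*(HX1 - HT) - ((n-1)*b)*(HX0 - HT) - (n*a+b)*E) - T)
    = 2*n*X1 - (n-1)*X0 - ((n*(a+b))*(HX1 - HT) - ((n-1)*b)*(HX0 - HT) - (n*a+b)*E) - (n+1)*T"
  proof -
    have h1: "(n+1)*((2*n/(n+1))*X1) = 2*n*X1" using assms by simp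
    have h2: "(n+1)*(((n-1)/(n+1))*X0) = (n-1)*X0" using assms by simp
    have h3: "(n+1)*((1/(n+1))*Y) = Y" for Y using assms by simp
    show ?thesis by (simp only: right_diff_distrib h1 h2 h3)
  qed
  then show ?thesis by (simp add: algebra_simps)
qed

lemma theta_step:
  fixes e :: "nat \<Rightarrow> real^'d" and H :: "real^'d^'d" and ts th0 :: "real^'d" and a b :: real
  defines "th \<equiv> noisy_theta H ts a b th0 e"
  shows "real (Suc (Suc k)) *\<^sub>R (th (Suc (Suc k)) - ts) =
     2 *\<^sub>R (real (Suc k) *\<^sub>R (th (Suc k) - ts)) - real k *\<^sub>R (th k - ts)
     - (a + b) *\<^sub>R (H *v (real (Suc k) *\<^sub>R (th (Suc k) - ts)))
     + b *\<^sub>R (H *v (real k *\<^sub>R (th k - ts))) + (real (Suc k) * a + b) *\<^sub>R e (Suc (Suc k))"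
proof -
  define n where "n = real (Suc k)"
  define x1 where "x1 = th (Suc k)"
  define x0 where "x0 = th k"
  have n1: "n + 1 \<noteq> 0" by (simp add: n_def)
  have rec: "th (Suc (Suc k)) = (2 * n / (n + 1)) *\<^sub>R x1 - ((n - 1) / (n + 1)) *\<^sub>R x0
     - (1 / (n + 1)) *\<^sub>R ((n * (a + b)) *\<^sub>R (H *v (x1 - ts))
          - ((n - 1) * b) *\<^sub>R (H *v (x0 - ts)) - (n * a + b) *\<^sub>R e (Suc (Suc k)))"
    by (simp add: th_def x1_def x0_def n_def Let_def)
  have e1: "real (Suc (Suc k)) = n + 1" and e2: "real k = n - 1" and e3: "real (Suc k) = n" by (simp_all add: n_def)
  show ?thesis
    unfolding rec x1_def[symmetric] x0_def[symmetric] e1 e2 e3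
  proof (rule vec_eq_iff[THEN iffD2], rule allI)
    fix i
    show "((n + 1) *\<^sub>R ((2 * n / (n + 1)) *\<^sub>R x1 - ((n - 1) / (n + 1)) *\<^sub>R x0 -
          (1 / (n + 1)) *\<^sub>R ((n * (a + b)) *\<^sub>R (H *v (x1 - ts)) - ((n - 1) * b) *\<^sub>R (H *v (x0 - ts)) -
          (n * a + b) *\<^sub>R e (Suc (Suc k))) - ts)) $ i =
       (2 *\<^sub>R (n *\<^sub>R (x1 - ts)) - (n - 1) *\<^sub>R (x0 - ts) - (a + b) *\<^sub>R (H *v (n *\<^sub>R (x1 - ts))) +
        b *\<^sub>R (H *v ((n - 1) *\<^sub>R (x0 - ts))) + (n * a + b) *\<^sub>R e (Suc (Suc k))) $ i"
      unfolding vector_scaleR_component vector_minus_component vector_add_component matrix_vector_mult_scaleR matrix_vector_mult_diff_distrib real_scaleR_def mult.assoc[symmetric]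
      using n1 by (rule theta_aux)
  qed
qed

lemma Hsum: "H *v (\<Sum>j\<in>A. f j) = (\<Sum>j\<in>A. H *v f j)"
  by (induct A rule: infinite_finite_induct) (simp_all add: matrix_vector_right_distrib)

lemma Rsum: "(\<Sum>j\<in>A. 2 *\<^sub>R x j - y j - c1 *\<^sub>R (H *v x j) + c2 *\<^sub>R (H *v y j)) =
   2 *\<^sub>R (\<Sum>j\<in>A. x j) - (\<Sum>j\<in>A. y j) - c1 *\<^sub>R (H *v (\<Sum>j\<in>A. x j)) + c2 *\<^sub>R (H *v (\<Sum>j\<in>A. y j))"
  by (simp add: Hsum sum.distrib sum_subtractf scaleR_sum_right)

lemma eta_formula:
  fixes e :: "nat \<Rightarrow> real^'d" and H :: "real^'d^'d" and ts th0 :: "real^'d" and a b :: real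
  shows "real n *\<^sub>R (noisy_theta H ts a b th0 e n - ts) =
    uu H a b n (th0 - ts) + (\<Sum>j\<in>{2..n}. ((real j - 1) * a + b) *\<^sub>R uu H a b (Suc n - j) (e j))"
proof -
  define G where "G m j = ((real j - 1) * a + b) *\<^sub>R uu H a b m (e j)" for m j
  define S where "S n = (\<Sum>j\<in>{2..n}. G (Suc n - j) j)" for n
  define F where "F n = uu H a b n (th0 - ts) + S n" for n
  define \<eta> where "\<eta> n = real n *\<^sub>R (noisy_theta H ts a b th0 e n - ts)" for n
  have Grec: "G (Suc (Suc m)) j = 2 *\<^sub>R G (Suc m) j - G m j - (a + b) *\<^sub>R (H *v G (Suc m) j) + b *\<^sub>R (H *v G m j)" for m j
    by (simp add: G_def algebra_simps matrix_vector_mult_scaleR)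
  have Sstep: "S (Suc (Suc k)) = 2 *\<^sub>R S (Suc k) - S k - (a + b) *\<^sub>R (H *v S (Suc k)) + b *\<^sub>R (H *v S k)
      + (real (Suc k) * a + b) *\<^sub>R e (Suc (Suc k))" for k
  proof -
    have "S (Suc (Suc k)) = (\<Sum>j\<in>{2..Suc k}. G (Suc (Suc (Suc k)) - j) j) + G 1 (Suc (Suc k))"
      by (simp add: S_def)
    also have "(\<Sum>j\<in>{2..Suc k}. G (Suc (Suc (Suc k)) - j) j) =
       (\<Sum>j\<in>{2..Suc k}. 2 *\<^sub>R G (Suc (Suc k) - j) j - G (Suc k - j) j - (a + b) *\<^sub>R (H *v G (Suc (Suc k) - j) j) + b *\<^sub>R (H *v G (Suc k - j) j))"
    proof (rule sum.cong)
      fix j assume "j \<in> {2..Suc k}"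
      then have "Suc (Suc (Suc k)) - j = Suc (Suc (Suc k - j))" "Suc (Suc k) - j = Suc (Suc k - j)" by auto
      then show "G (Suc (Suc (Suc k)) - j) j = 2 *\<^sub>R G (Suc (Suc k) - j) j - G (Suc k - j) j - (a + b) *\<^sub>R (H *v G (Suc (Suc k) - j) j) + b *\<^sub>R (H *v G (Suc k - j) j)"
        by (simp only: Grec)
    qed simp
    also have "\<dots> = 2 *\<^sub>R S (Suc k) - (\<Sum>j\<in>{2..Suc k}. G (Suc k - j) j) - (a + b) *\<^sub>R (H *v S (Suc k)) + b *\<^sub>R (H *v (\<Sum>j\<in>{2..Suc k}. G (Suc k - j) j))"
      by (simp only: Rsum S_def)
    also have "(\<Sum>j\<in>{2..Suc k}. G (Suc k - j) j) = S k"
      by (simp add: S_def G_def)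
    also have "G 1 (Suc (Suc k)) = (real (Suc k) * a + b) *\<^sub>R e (Suc (Suc k))"
      by (simp add: G_def)
    finally show ?thesis .
  qed
  have "\<eta> n = F n \<and> \<eta> (Suc n) = F (Suc n)"
  proof (induction n)
    case 0 then show ?case by (simp add: \<eta>_def F_def S_def)
  next
    case (Suc k)
    have "\<eta> (Suc (Suc k)) = 2 *\<^sub>R \<eta> (Suc k) - \<eta> k - (a + b) *\<^sub>R (H *v \<eta> (Suc k)) + b *\<^sub>R (H *v \<eta> k)
      + (real (Suc k) * a + b) *\<^sub>R e (Suc (Suc k))"
      unfolding \<eta>_def by (rule theta_step)
    also have "\<dots> = F (Suc (Suc k))"
      using Suc.IH unfolding F_def Sstep by (simp add: algebra_simps matrix_vector_right_distrib)
    finally show ?case using Suc.IH by simp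
  qed
  then show ?thesis by (simp add: \<eta>_def F_def S_def G_def)
qed

lemma eig_facts:
  fixes H :: "real^'d^'d"
  assumes sym: "transpose H = H" and pd: "\<And>x. x \<noteq> 0 \<Longrightarrow> x \<bullet> (H *v x) > 0"
    and B: "finite B" "pairwise orthogonal B"
    "\<forall>b\<in>B. norm b = 1 \<and> H *v b = (b \<bullet> (H *v b)) *\<^sub>R b"
    "\<And>v. v = (\<Sum>b\<in>B. (v \<bullet> b) *\<^sub>R b)"
    and bB: "b \<in> B"
  shows "0 < b \<bullet> (H *v b)" "b \<bullet> (H *v b) \<le> largest_eigenvalue H"
proof -
  have nb: "\<forall>b\<in>B. norm b = 1" using B(3) by auto
  have b0: "b \<noteq> 0" using B(3) bB by auto
  then show "0 < b \<bullet> (H *v b)" using pd by simp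
  define E where "E = {c. \<exists>v. v \<noteq> 0 \<and> H *v v = c *\<^sub>R v}"
  have sub: "E \<subseteq> (\<lambda>b. b \<bullet> (H *v b)) ` B"
  proof
    fix c assume "c \<in> E"
    then obtain v where v: "v \<noteq> 0" "H *v v = c *\<^sub>R v" by (auto simp: E_def)
    have "\<exists>b\<in>B. v \<bullet> b \<noteq> 0"
    proof (rule ccontr)
      assume "\<not> ?thesis"
      then have "v = 0" using B(4)[of v] by (metis (no_types, lifting) scale_eq_0_iff sum.neutral)
      then show False using v by simp
    qed
    then obtain b where b: "b \<in> B" "v \<bullet> b \<noteq> 0" by blast
    have "c * (v \<bullet> b) = (H *v v) \<bullet> b" using v by simp
    also have "\<dots> = v \<bullet> (H *v b)" using sym_inner[OF sym, of v b] by simp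
    also have "\<dots> = (b \<bullet> (H *v b)) * (v \<bullet> b)"
    proof -
      have "H *v b = (b \<bullet> (H *v b)) *\<^sub>R b" using B(3) b by auto
      then have "v \<bullet> (H *v b) = v \<bullet> ((b \<bullet> (H *v b)) *\<^sub>R b)" by simp
      then show ?thesis by (simp add: inner_commute)
    qed
    finally have "c = b \<bullet> (H *v b)" using b(2) by simp
    then show "c \<in> (\<lambda>b. b \<bullet> (H *v b)) ` B" using b by auto
  qed
  have "finite E" using finite_subset[OF sub] B(1) by auto
  moreover have "b \<bullet> (H *v b) \<in> E" using B(3) bB b0 unfolding E_def by auto
  ultimately have "b \<bullet> (H *v b) \<le> Max E" by simp
  then show "b \<bullet> (H *v b) \<le> largest_eigenvalue H" by (simp add: largest_eigenvalue_def E_def)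
qed

lemma uu_bounds:
  fixes H :: "real^'d^'d"
  assumes sym: "transpose H = H" and pd: "\<And>x. x \<noteq> 0 \<Longrightarrow> x \<bullet> (H *v x) > 0"
    and a0: "0 \<le> \<alpha>" and a1: "\<alpha> \<le> 1 / largest_eigenvalue H"
    and b0: "0 \<le> \<beta>" and b1: "\<beta> \<le> 2 / largest_eigenvalue H - \<alpha>"
  shows "\<alpha> > 0 \<Longrightarrow> uu H \<alpha> \<beta> m v \<bullet> (H *v uu H \<alpha> \<beta> m v) \<le> (2 / \<alpha>) * (v \<bullet> v)"
    and "\<alpha> + \<beta> > 0 \<Longrightarrow> uu H \<alpha> \<beta> m v \<bullet> (H *v uu H \<alpha> \<beta> m v) \<le> (2 * real m / (\<alpha> + \<beta>)) * (v \<bullet> v)"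
proof -
  obtain B where B: "finite B" "pairwise orthogonal B"
    "\<forall>b\<in>B. norm b = 1 \<and> H *v b = (b \<bullet> (H *v b)) *\<^sub>R b"
    "\<And>v. v = (\<Sum>b\<in>B. (v \<bullet> b) *\<^sub>R b)"
    using spectral[OF sym] by blast
  define L where "L = largest_eigenvalue H"
  have eig: "uu H \<alpha> \<beta> m b = sc (\<alpha> * (b \<bullet> (H *v b))) (\<beta> * (b \<bullet> (H *v b))) m *\<^sub>R b" if "b \<in> B" for b
    using B(3) that by (intro uu_eigen) auto
  have ranges: "0 \<le> \<alpha> * l \<and> \<alpha> * l \<le> 1 \<and> 0 \<le> \<beta> * l \<and> \<alpha> * l + \<beta> * l \<le> 2"
    if "0 < l" "l \<le> L" for l
  proof -
    have L0: "0 < L" using that by simp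
    have "\<alpha> * l \<le> (1 / L) * L" using a0 a1 that by (intro mult_mono) (auto simp: L_def)
    moreover have "(\<alpha> + \<beta>) * l \<le> (2 / L) * L" using a0 b0 b1 that by (intro mult_mono) (auto simp: L_def)
    ultimately show ?thesis using L0 a0 b0 that by (auto simp: algebra_simps)
  qed
  show "\<alpha> > 0 \<Longrightarrow> uu H \<alpha> \<beta> m v \<bullet> (H *v uu H \<alpha> \<beta> m v) \<le> (2 / \<alpha>) * (v \<bullet> v)"
  proof (rule quad_bound[OF B uu_linear eig])
    fix b assume "\<alpha> > 0" "b \<in> B"
    define l where "l = b \<bullet> (H *v b)"
    have l: "0 < l" "l \<le> L" using eig_facts[OF sym pd B \<open>b \<in> B\<close>] by (auto simp: l_def L_def)
    have "\<alpha> * l * (sc (\<alpha> * l) (\<beta> * l) m)^2 \<le> 2" using ranges[OF l] sc_bound1[of "\<alpha> * l" "\<beta> * l" m] by auto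
    then show "l * (sc (\<alpha> * l) (\<beta> * l) m)^2 \<le> 2 / \<alpha>" using \<open>\<alpha> > 0\<close> by (simp add: field_simps)
  qed auto
  show "\<alpha> + \<beta> > 0 \<Longrightarrow> uu H \<alpha> \<beta> m v \<bullet> (H *v uu H \<alpha> \<beta> m v) \<le> (2 * real m / (\<alpha> + \<beta>)) * (v \<bullet> v)"
  proof (rule quad_bound[OF B uu_linear eig])
    fix b assume "\<alpha> + \<beta> > 0" "b \<in> B"
    define l where "l = b \<bullet> (H *v b)"
    have l: "0 < l" "l \<le> L" using eig_facts[OF sym pd B \<open>b \<in> B\<close>] by (auto simp: l_def L_def)
    have "(\<alpha> * l + \<beta> * l) * (sc (\<alpha> * l) (\<beta> * l) m)^2 \<le> 2 * real m" using ranges[OF l] sc_bound2[of "\<alpha> * l" "\<beta> * l" m] by auto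
    then have "(\<alpha> + \<beta>) * (l * (sc (\<alpha> * l) (\<beta> * l) m)^2) \<le> 2 * real m" by (simp add: algebra_simps)
    then show "l * (sc (\<alpha> * l) (\<beta> * l) m)^2 \<le> 2 * real m / (\<alpha> + \<beta>)" using \<open>\<alpha> + \<beta> > 0\<close> by (simp add: field_simps)
  qed auto
qed



lemma bilin_coord:
  fixes x y :: "real^'n" and A :: "real^'n^'n"
  shows "x \<bullet> (A *v y) = (\<Sum>p\<in>UNIV. \<Sum>r\<in>UNIV. A$p$r * (x$p * y$r))"
  by (simp add: inner_vec_def matrix_vector_mult_def sum_distrib_left algebra_simps)

lemma transpose_inner:
  fixes x y :: "real^'n" and A :: "real^'n^'n"
  shows "(A *v x) \<bullet> y = x \<bullet> (transpose A *v y)"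
  by (metis dot_lmul_matrix vector_transpose_matrix)

lemma prod_le_sq: "\<bar>(a::real) * b\<bar> \<le> a^2 + b^2"
proof -
  have "0 \<le> (\<bar>a\<bar> - \<bar>b\<bar>)^2" by simp
  then have "2 * (\<bar>a\<bar> * \<bar>b\<bar>) \<le> a^2 + b^2" by (simp add: power2_eq_square algebra_simps)
  moreover have "0 \<le> \<bar>a\<bar> * \<bar>b\<bar>" by simp
  ultimately have "\<bar>a\<bar> * \<bar>b\<bar> \<le> a^2 + b^2" by linarith
  then show ?thesis by (simp add: abs_mult)
qed

context prob_space
begin

lemma comp_meas:
  fixes X :: "'a \<Rightarrow> real^'n"
  assumes "X \<in> borel_measurable M"
  shows "(\<lambda>\<omega>. X \<omega> $ p) \<in> borel_measurable M"
  using measurable_compose[OF assms borel_measurable_nth] by simp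

lemma L2_integrable_prod:
  fixes X Y :: "'a \<Rightarrow> real^'n"
  assumes X: "X \<in> borel_measurable M" "integrable M (\<lambda>\<omega>. (norm (X \<omega>))^2)"
    and Y: "Y \<in> borel_measurable M" "integrable M (\<lambda>\<omega>. (norm (Y \<omega>))^2)"
  shows "integrable M (\<lambda>\<omega>. X \<omega> $ p * Y \<omega> $ r)"
proof (rule Bochner_Integration.integrable_bound[where f="\<lambda>\<omega>. (norm (X \<omega>))^2 + (norm (Y \<omega>))^2"])
  show "integrable M (\<lambda>\<omega>. (norm (X \<omega>))^2 + (norm (Y \<omega>))^2)" using X Y by simp
  show "(\<lambda>\<omega>. X \<omega> $ p * Y \<omega> $ r) \<in> borel_measurable M"
    using comp_meas[OF X(1)] comp_meas[OF Y(1)] by simp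
  show "AE \<omega> in M. norm (X \<omega> $ p * Y \<omega> $ r) \<le> norm ((norm (X \<omega>))^2 + (norm (Y \<omega>))^2)"
  proof (rule AE_I2)
    fix \<omega>
    have "\<bar>X \<omega> $ p\<bar> \<le> norm (X \<omega>)" "\<bar>Y \<omega> $ r\<bar> \<le> norm (Y \<omega>)"
      using component_le_norm_cart by (metis real_norm_def)+
    then have "(X \<omega> $ p)^2 \<le> (norm (X \<omega>))^2" "(Y \<omega> $ r)^2 \<le> (norm (Y \<omega>))^2"
      by (metis abs_ge_zero power2_abs power_mono)+
    then show "norm (X \<omega> $ p * Y \<omega> $ r) \<le> norm ((norm (X \<omega>))^2 + (norm (Y \<omega>))^2)"
      using prod_le_sq[of "X \<omega> $ p" "Y \<omega> $ r"] by simp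
  qed
qed

lemma L2_integrable_vec:
  fixes X :: "'a \<Rightarrow> real^'n"
  assumes X: "X \<in> borel_measurable M" "integrable M (\<lambda>\<omega>. (norm (X \<omega>))^2)"
  shows "integrable M X"
proof (rule Bochner_Integration.integrable_bound[where f="\<lambda>\<omega>. 1 + (norm (X \<omega>))^2"])
  show "integrable M (\<lambda>\<omega>. 1 + (norm (X \<omega>))^2)" using X by simp
  show "X \<in> borel_measurable M" by fact
  show "AE \<omega> in M. norm (X \<omega>) \<le> norm (1 + (norm (X \<omega>))^2)"
  proof (rule AE_I2)
    fix \<omega>
    have "0 \<le> (norm (X \<omega>) - 1)^2" by simp
    then have "2 * norm (X \<omega>) \<le> 1 + (norm (X \<omega>))^2" by (simp add: power2_eq_square algebra_simps)
    moreover have "0 \<le> norm (X \<omega>)" by simp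
    ultimately have "norm (X \<omega>) \<le> 1 + (norm (X \<omega>))^2" by linarith
    then show "norm (X \<omega>) \<le> norm (1 + (norm (X \<omega>))^2)" by simp
  qed
qed

lemma bilin_integral:
  fixes X Y :: "'a \<Rightarrow> real^'n" and A :: "real^'n^'n"
  assumes X: "X \<in> borel_measurable M" "integrable M (\<lambda>\<omega>. (norm (X \<omega>))^2)"
    and Y: "Y \<in> borel_measurable M" "integrable M (\<lambda>\<omega>. (norm (Y \<omega>))^2)"
  shows "integrable M (\<lambda>\<omega>. X \<omega> \<bullet> (A *v Y \<omega>))"
    and "(\<integral>\<omega>. X \<omega> \<bullet> (A *v Y \<omega>) \<partial>M) = (\<Sum>p\<in>UNIV. \<Sum>r\<in>UNIV. A$p$r * (\<integral>\<omega>. X \<omega> $ p * Y \<omega> $ r \<partial>M))"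
proof -
  have i: "integrable M (\<lambda>\<omega>. X \<omega> $ p * Y \<omega> $ r)" for p r using L2_integrable_prod[OF X Y] .
  show "integrable M (\<lambda>\<omega>. X \<omega> \<bullet> (A *v Y \<omega>))"
    unfolding bilin_coord using i by (intro Bochner_Integration.integrable_sum Bochner_Integration.integrable_mult_right)
  show "(\<integral>\<omega>. X \<omega> \<bullet> (A *v Y \<omega>) \<partial>M) = (\<Sum>p\<in>UNIV. \<Sum>r\<in>UNIV. A$p$r * (\<integral>\<omega>. X \<omega> $ p * Y \<omega> $ r \<partial>M))"
    unfolding bilin_coord using i by (simp add: Bochner_Integration.integral_sum Bochner_Integration.integrable_sum)
qed

end



lemma alg2:
  fixes s n X Y T :: real
  assumes "0 < s" "0 < n"
  shows "((2 * n / s) * X + n * Y * (2 * n / s) * T) / (2 * n^2) = X / (s * n) + Y / s * T"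
  using assms by (simp add: field_simps power2_eq_square)

lemma quad_expand:
  fixes H :: "real^'n^'n"
  assumes sym: "transpose H = H"
  shows "(D + (\<Sum>j\<in>J. Z j)) \<bullet> (H *v (D + (\<Sum>j\<in>J. Z j))) = D \<bullet> (H *v D) + (\<Sum>j\<in>J. 2 * (D \<bullet> (H *v Z j)))
     + (\<Sum>j\<in>J. \<Sum>l\<in>J. Z j \<bullet> (H *v Z l))"
proof -
  have s: "Z j \<bullet> (H *v D) = D \<bullet> (H *v Z j)" for j
    using sym_inner[OF sym, of "Z j" D] by (simp add: inner_commute)
  show ?thesis
    by (simp add: matrix_vector_right_distrib Hsum inner_add_left inner_add_right inner_sum_left inner_sum_right
        s sum.distrib algebra_simps sum_distrib_left) (rule sum.swap)
qed

theorem theorem3: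
  fixes M :: "'w measure"
    and H C :: "real^'d^'d"
    and q \<theta>0 :: "real^'d"
    and \<epsilon> :: "nat \<Rightarrow> 'w \<Rightarrow> real^'d"
    and \<alpha> \<beta> :: real and N :: nat
  assumes "prob_space M"
    and H_sym: "transpose H = H"
    and H_pd: "\<And>x. x \<noteq> 0 \<Longrightarrow> x \<bullet> (H *v x) > 0"
    and C_sym: "transpose C = C"
    and C_psd: "\<And>x. x \<bullet> (C *v x) \<ge> 0"
    and eps_meas: "\<And>n. n \<ge> 2 \<Longrightarrow> \<epsilon> n \<in> borel_measurable M"
    and eps_L2: "\<And>n. n \<ge> 2 \<Longrightarrow> integrable M (\<lambda>\<omega>. (norm (\<epsilon> n \<omega>))\<^sup>2)"
    and eps_mean: "\<And>n. n \<ge> 2 \<Longrightarrow> prob_space.expectation M (\<epsilon> n) = 0"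
    and eps_uncorr: "\<And>n m i j. n \<ge> 2 \<Longrightarrow> m \<ge> 2 \<Longrightarrow> n \<noteq> m \<Longrightarrow>
          prob_space.expectation M (\<lambda>\<omega>. \<epsilon> n \<omega> $ i * \<epsilon> m \<omega> $ j) = 0"
    and eps_cov: "\<And>n i j. n \<ge> 2 \<Longrightarrow>
          prob_space.expectation M (\<lambda>\<omega>. \<epsilon> n \<omega> $ i * \<epsilon> n \<omega> $ j) = C $ i $ j"
    and N_pos: "N \<ge> 1"
    and \<alpha>_nn: "0 \<le> \<alpha>" and \<alpha>_le: "\<alpha> \<le> 1 / largest_eigenvalue H"
    and \<beta>_nn: "0 \<le> \<beta>" and \<beta>_le: "\<beta> \<le> 2 / largest_eigenvalue H - \<alpha>"
  shows "ereal (prob_space.expectation M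
             (\<lambda>\<omega>. quad_obj H q (noisy_theta H (matrix_inv H *v q) \<alpha> \<beta> \<theta>0 (\<lambda>n. \<epsilon> n \<omega>) N))
           - quad_obj H q (matrix_inv H *v q))
         \<le> min (if \<alpha> > 0 then ereal ((norm (\<theta>0 - matrix_inv H *v q))\<^sup>2 / (\<alpha> * real N ^ 2)
                      + (\<alpha> * real N + \<beta>)\<^sup>2 / (\<alpha> * real N) * trace C)
                 else \<infinity>)
               (if \<alpha> + \<beta> > 0 then ereal (4 * (norm (\<theta>0 - matrix_inv H *v q))\<^sup>2 / ((\<alpha> + \<beta>) * real N)
                      + 4 * (\<alpha> * real N + \<beta>)\<^sup>2 / (\<alpha> + \<beta>) * trace C)
                 else \<infinity>)"
proof -
  interpret P: prob_space M by fact
  define ts where "ts = matrix_inv H *v q"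
  define x where "x = \<theta>0 - ts"
  define th where "th \<omega> = noisy_theta H ts \<alpha> \<beta> \<theta>0 (\<lambda>n. \<epsilon> n \<omega>) N" for \<omega>
  define c where "c j = (real j - 1) * \<alpha> + \<beta>" for j :: nat
  define U where "U m = matrix (uu H \<alpha> \<beta> m)" for m
  define J where "J = {2..N}"
  define D where "D = uu H \<alpha> \<beta> N x"
  define Z where "Z j \<omega> = c j *\<^sub>R uu H \<alpha> \<beta> (Suc N - j) (\<epsilon> j \<omega>)" for j \<omega>
  define Q where "Q \<omega> = (D + (\<Sum>j\<in>J. Z j \<omega>)) \<bullet> (H *v (D + (\<Sum>j\<in>J. Z j \<omega>)))" for \<omega>
  have Uw: "uu H \<alpha> \<beta> m v = U m *v v" for m v
    unfolding U_def using matrix_vector_mul(2)[OF uu_linear, of H \<alpha> \<beta> m] by metis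
  have "inj ((*v) H)"
  proof (rule injI)
    fix u v assume "H *v u = H *v v"
    then have "H *v (u - v) = 0" by (simp add: matrix_vector_mult_diff_distrib)
    then have "(u - v) \<bullet> (H *v (u - v)) = 0" by simp
    then show "u = v" using H_pd[of "u - v"] by (cases "u - v = 0") auto
  qed
  then have "invertible H" using matrix_left_invertible_injective invertible_left_inverse by blast
  then have "H ** matrix_inv H = mat 1"
    unfolding invertible_def matrix_inv_def by (rule someI_ex[where P="\<lambda>A'. H ** A' = mat 1 \<and> A' ** H = mat 1", THEN conjunct1])
  then have Hts: "H *v ts = q" by (simp add: ts_def matrix_vector_mul_assoc)
  have gap: "quad_obj H q y - quad_obj H q ts = (1/2) * ((y - ts) \<bullet> (H *v (y - ts)))" for y
  proof -
    have s: "ts \<bullet> (H *v y) = y \<bullet> q" using sym_inner[OF H_sym, of ts y] Hts by (simp add: inner_commute)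
    have s2: "y \<bullet> (H *v ts) = y \<bullet> q" using Hts by simp
    have s3: "ts \<bullet> (H *v ts) = q \<bullet> ts" using Hts by (simp add: inner_commute)
    show ?thesis unfolding quad_obj_def
      by (simp add: inner_diff_left inner_diff_right matrix_vector_mult_diff_distrib s s2 s3 algebra_simps inner_commute)
  qed
  have Npos: "0 < real N" using N_pos by simp
  have gapQ: "quad_obj H q (th \<omega>) - quad_obj H q ts = Q \<omega> / (2 * (real N)^2)" for \<omega>
  proof -
    have eta: "real N *\<^sub>R (th \<omega> - ts) = D + (\<Sum>j\<in>J. Z j \<omega>)"
      unfolding th_def D_def J_def Z_def c_def x_def by (rule eta_formula)
    have "Q \<omega> = (real N)^2 * ((th \<omega> - ts) \<bullet> (H *v (th \<omega> - ts)))"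
      unfolding Q_def eta[symmetric] by (simp add: matrix_vector_mult_scaleR power2_eq_square)
    then show ?thesis using gap[of "th \<omega>"] Npos by (simp add: field_simps)
  qed
  have em: "\<epsilon> j \<in> borel_measurable M" "integrable M (\<lambda>\<omega>. (norm (\<epsilon> j \<omega>))^2)" if "j \<in> J" for j
    using that eps_meas eps_L2 by (auto simp: J_def)
  have eint: "integrable M (\<epsilon> j)" if "j \<in> J" for j
    using P.L2_integrable_vec[OF em[OF that]] .
  have T1eq: "D \<bullet> (H *v Z j \<omega>) = c j * ((transpose (H ** U (Suc N - j)) *v D) \<bullet> \<epsilon> j \<omega>)" for j \<omega>
  proof -
    have t: "(transpose A *v D) \<bullet> y = D \<bullet> (A *v y)" for A :: "real^'d^'d" and y
      using transpose_inner[of "transpose A" D y] by simp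
    show ?thesis by (simp add: Z_def Uw matrix_vector_mult_scaleR matrix_vector_mul_assoc t dot_lmul_matrix)
  qed
  have T1int: "integrable M (\<lambda>\<omega>. D \<bullet> (H *v Z j \<omega>))" if "j \<in> J" for j
    unfolding T1eq using eint[OF that] by simp
  have T1zero: "(\<integral>\<omega>. D \<bullet> (H *v Z j \<omega>) \<partial>M) = 0" if "j \<in> J" for j
  proof -
    have "P.expectation (\<epsilon> j) = 0" using eps_mean that by (auto simp: J_def)
    then show ?thesis unfolding T1eq using eint[OF that] by simp
  qed
  define G where "G j l = transpose (U (Suc N - j)) ** H ** U (Suc N - l)" for j l
  have T2eq: "Z j \<omega> \<bullet> (H *v Z l \<omega>) = c j * c l * (\<epsilon> j \<omega> \<bullet> (G j l *v \<epsilon> l \<omega>))" for j l \<omega>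
    by (simp add: Z_def Uw G_def matrix_vector_mult_scaleR matrix_vector_mul_assoc[symmetric] transpose_inner)
  have T2int: "integrable M (\<lambda>\<omega>. Z j \<omega> \<bullet> (H *v Z l \<omega>))" if "j \<in> J" "l \<in> J" for j l
    unfolding T2eq using P.bilin_integral(1)[OF em[OF that(1)] em[OF that(2)]] by simp
  have T2zero: "(\<integral>\<omega>. Z j \<omega> \<bullet> (H *v Z l \<omega>) \<partial>M) = 0" if "j \<in> J" "l \<in> J" "j \<noteq> l" for j l
  proof -
    have "(\<integral>\<omega>. \<epsilon> j \<omega> $ p * \<epsilon> l \<omega> $ r \<partial>M) = 0" for p r
      using eps_uncorr[of j l p r] that by (auto simp: J_def)
    then have "(\<integral>\<omega>. \<epsilon> j \<omega> \<bullet> (G j l *v \<epsilon> l \<omega>) \<partial>M) = 0"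
      using P.bilin_integral(2)[OF em[OF that(1)] em[OF that(2)]] by simp
    then show ?thesis unfolding T2eq by simp
  qed
  have normsq: "\<epsilon> j \<omega> \<bullet> \<epsilon> j \<omega> = (norm (\<epsilon> j \<omega>))^2" for j \<omega> by (simp add: power2_norm_eq_inner)
  have trC: "(\<integral>\<omega>. \<epsilon> j \<omega> \<bullet> \<epsilon> j \<omega> \<partial>M) = trace C" if "j \<in> J" for j
  proof -
    have i: "integrable M (\<lambda>\<omega>. \<epsilon> j \<omega> $ p * \<epsilon> j \<omega> $ p)" for p
      using P.L2_integrable_prod[OF em[OF that] em[OF that]] .
    have "(\<integral>\<omega>. \<epsilon> j \<omega> \<bullet> \<epsilon> j \<omega> \<partial>M) = (\<Sum>p\<in>UNIV. \<integral>\<omega>. \<epsilon> j \<omega> $ p * \<epsilon> j \<omega> $ p \<partial>M)"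
      unfolding inner_vec_def using i by (simp add: Bochner_Integration.integral_sum)
    also have "\<dots> = (\<Sum>p\<in>UNIV. C $ p $ p)" using eps_cov that by (auto simp: J_def)
    finally show ?thesis by (simp add: trace_def)
  qed
  have trC0: "0 \<le> trace C"
  proof (cases "J = {}")
    case True
    have "(\<integral>\<omega>. \<epsilon> 2 \<omega> \<bullet> \<epsilon> 2 \<omega> \<partial>M) = trace C"
    proof -
      have i: "integrable M (\<lambda>\<omega>. \<epsilon> 2 \<omega> $ p * \<epsilon> 2 \<omega> $ p)" for p
        using P.L2_integrable_prod[of "\<epsilon> 2" "\<epsilon> 2"] eps_meas eps_L2 by auto
      have "(\<integral>\<omega>. \<epsilon> 2 \<omega> \<bullet> \<epsilon> 2 \<omega> \<partial>M) = (\<Sum>p\<in>UNIV. \<integral>\<omega>. \<epsilon> 2 \<omega> $ p * \<epsilon> 2 \<omega> $ p \<partial>M)"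
        unfolding inner_vec_def using i by (simp add: Bochner_Integration.integral_sum)
      also have "\<dots> = (\<Sum>p\<in>UNIV. C $ p $ p)" using eps_cov by auto
      finally show ?thesis by (simp add: trace_def)
    qed
    moreover have "0 \<le> (\<integral>\<omega>. \<epsilon> 2 \<omega> \<bullet> \<epsilon> 2 \<omega> \<partial>M)" by (rule integral_nonneg_AE) simp
    ultimately show ?thesis by simp
  next
    case False
    then obtain j where "j \<in> J" by auto
    have "0 \<le> (\<integral>\<omega>. \<epsilon> j \<omega> \<bullet> \<epsilon> j \<omega> \<partial>M)" by (rule integral_nonneg_AE) simp
    then show ?thesis using trC[OF \<open>j \<in> J\<close>] by simp
  qed
  have Qexp: "Q \<omega> = D \<bullet> (H *v D) + (\<Sum>j\<in>J. 2 * (D \<bullet> (H *v Z j \<omega>))) + (\<Sum>j\<in>J. \<Sum>l\<in>J. Z j \<omega> \<bullet> (H *v Z l \<omega>))" for \<omega>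
    unfolding Q_def by (rule quad_expand[OF H_sym])
  have Qint: "integrable M Q"
    unfolding Qexp[abs_def] using T1int T2int by (intro Bochner_Integration.integrable_add Bochner_Integration.integrable_sum) auto
  have EQ: "(\<integral>\<omega>. Q \<omega> \<partial>M) = D \<bullet> (H *v D) + (\<Sum>j\<in>J. \<integral>\<omega>. Z j \<omega> \<bullet> (H *v Z j \<omega>) \<partial>M)"
  proof -
    have "(\<integral>\<omega>. Q \<omega> \<partial>M) = D \<bullet> (H *v D) + (\<Sum>j\<in>J. 2 * (\<integral>\<omega>. D \<bullet> (H *v Z j \<omega>) \<partial>M)) + (\<Sum>j\<in>J. \<Sum>l\<in>J. \<integral>\<omega>. Z j \<omega> \<bullet> (H *v Z l \<omega>) \<partial>M)"
      unfolding Qexp using T1int T2int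
      by (simp add: Bochner_Integration.integral_add Bochner_Integration.integrable_sum Bochner_Integration.integral_sum P.prob_space)
    also have "(\<Sum>j\<in>J. 2 * (\<integral>\<omega>. D \<bullet> (H *v Z j \<omega>) \<partial>M)) = 0" using T1zero by simp
    also have "(\<Sum>j\<in>J. \<Sum>l\<in>J. \<integral>\<omega>. Z j \<omega> \<bullet> (H *v Z l \<omega>) \<partial>M) = (\<Sum>j\<in>J. \<integral>\<omega>. Z j \<omega> \<bullet> (H *v Z j \<omega>) \<partial>M)"
    proof (rule sum.cong[OF refl])
      fix j assume j: "j \<in> J"
      have "(\<Sum>l\<in>J. \<integral>\<omega>. Z j \<omega> \<bullet> (H *v Z l \<omega>) \<partial>M) = (\<Sum>l\<in>J. if l = j then \<integral>\<omega>. Z j \<omega> \<bullet> (H *v Z j \<omega>) \<partial>M else 0)"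
        by (rule sum.cong) (use T2zero j in auto)
      also have "\<dots> = (\<integral>\<omega>. Z j \<omega> \<bullet> (H *v Z j \<omega>) \<partial>M)" using j by (simp add: J_def)
      finally show "(\<Sum>l\<in>J. \<integral>\<omega>. Z j \<omega> \<bullet> (H *v Z l \<omega>) \<partial>M) = (\<integral>\<omega>. Z j \<omega> \<bullet> (H *v Z j \<omega>) \<partial>M)" .
    qed
    finally show ?thesis by simp
  qed
  have Egap: "P.expectation (\<lambda>\<omega>. quad_obj H q (th \<omega>)) - quad_obj H q ts = P.expectation Q / (2 * (real N)^2)"
  proof -
    have "P.expectation (\<lambda>\<omega>. quad_obj H q (th \<omega>)) = P.expectation (\<lambda>\<omega>. quad_obj H q ts + Q \<omega> / (2 * (real N)^2))"
      using gapQ by (intro Bochner_Integration.integral_cong) (auto simp: algebra_simps)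
    also have "\<dots> = quad_obj H q ts + P.expectation Q / (2 * (real N)^2)"
      using Qint by (simp add: Bochner_Integration.integral_add P.prob_space)
    finally show ?thesis by simp
  qed
  have key: "P.expectation (\<lambda>\<omega>. quad_obj H q (th \<omega>)) - quad_obj H q ts
      \<le> (K * (x \<bullet> x) + real N * (\<alpha> * real N + \<beta>)^2 * K * trace C) / (2 * (real N)^2)"
    if K0: "0 \<le> K" and KB: "\<And>m v. m \<le> N \<Longrightarrow> uu H \<alpha> \<beta> m v \<bullet> (H *v uu H \<alpha> \<beta> m v) \<le> K * (v \<bullet> v)" for K
  proof -
    have cb: "0 \<le> c j \<and> c j \<le> \<alpha> * real N + \<beta>" if "j \<in> J" for j
    proof -
      have "1 \<le> real j" "real j \<le> real N" using that by (auto simp: J_def)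
      then have "0 \<le> (real j - 1) * \<alpha>" "(real j - 1) * \<alpha> \<le> real N * \<alpha>"
        using \<alpha>_nn by (auto intro: mult_right_mono)
      then show ?thesis using \<beta>_nn by (simp add: c_def algebra_simps)
    qed
    have Zb: "(\<integral>\<omega>. Z j \<omega> \<bullet> (H *v Z j \<omega>) \<partial>M) \<le> (\<alpha> * real N + \<beta>)^2 * K * trace C" if j: "j \<in> J" for j
    proof -
      have "(\<integral>\<omega>. Z j \<omega> \<bullet> (H *v Z j \<omega>) \<partial>M) \<le> (\<integral>\<omega>. (c j)^2 * K * (\<epsilon> j \<omega> \<bullet> \<epsilon> j \<omega>) \<partial>M)"
      proof (rule integral_mono)
        show "integrable M (\<lambda>\<omega>. Z j \<omega> \<bullet> (H *v Z j \<omega>))" using T2int j by simp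
        show "integrable M (\<lambda>\<omega>. (c j)^2 * K * (\<epsilon> j \<omega> \<bullet> \<epsilon> j \<omega>))" using em[OF j] by (simp add: normsq)
        fix \<omega>
        have "Z j \<omega> \<bullet> (H *v Z j \<omega>) = (c j)^2 * (uu H \<alpha> \<beta> (Suc N - j) (\<epsilon> j \<omega>) \<bullet> (H *v uu H \<alpha> \<beta> (Suc N - j) (\<epsilon> j \<omega>)))"
          by (simp add: Z_def matrix_vector_mult_scaleR power2_eq_square)
        also have "\<dots> \<le> (c j)^2 * (K * (\<epsilon> j \<omega> \<bullet> \<epsilon> j \<omega>))"
          using j by (intro mult_left_mono KB) (auto simp: J_def)
        finally show "Z j \<omega> \<bullet> (H *v Z j \<omega>) \<le> (c j)^2 * K * (\<epsilon> j \<omega> \<bullet> \<epsilon> j \<omega>)" by simp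
      qed
      also have "\<dots> = (c j)^2 * K * trace C" using trC[OF j] by simp
      also have "\<dots> \<le> (\<alpha> * real N + \<beta>)^2 * K * trace C"
        using cb[OF j] K0 trC0 by (intro mult_right_mono power_mono) auto
      finally show ?thesis .
    qed
    have "P.expectation Q \<le> K * (x \<bullet> x) + (\<Sum>j\<in>J. (\<alpha> * real N + \<beta>)^2 * K * trace C)"
      unfolding EQ using KB[of N x] Zb by (intro add_mono sum_mono) (auto simp: D_def)
    also have "(\<Sum>j\<in>J. (\<alpha> * real N + \<beta>)^2 * K * trace C) \<le> real N * ((\<alpha> * real N + \<beta>)^2 * K * trace C)"
    proof -
      have "card J \<le> N" by (simp add: J_def)
      moreover have "0 \<le> (\<alpha> * real N + \<beta>)^2 * K * trace C" using K0 trC0 by simp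
      ultimately show ?thesis by (simp add: mult_right_mono)
    qed
    finally have "P.expectation Q \<le> K * (x \<bullet> x) + real N * (\<alpha> * real N + \<beta>)^2 * K * trace C" by (simp add: algebra_simps)
    then show ?thesis unfolding Egap using Npos by (simp add: divide_right_mono)
  qed
  have xx: "x \<bullet> x = (norm (\<theta>0 - matrix_inv H *v q))^2" by (simp add: x_def ts_def power2_norm_eq_inner)
  define LHS where "LHS = P.expectation (\<lambda>\<omega>. quad_obj H q (th \<omega>)) - quad_obj H q ts"
  have B1: "LHS \<le> (norm (\<theta>0 - matrix_inv H *v q))^2 / (\<alpha> * real N ^ 2) + (\<alpha> * real N + \<beta>)^2 / (\<alpha> * real N) * trace C"
    if ap: "\<alpha> > 0"
  proof -
    have "LHS \<le> ((2 / \<alpha>) * (x \<bullet> x) + real N * (\<alpha> * real N + \<beta>)^2 * (2 / \<alpha>) * trace C) / (2 * (real N)^2)"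
      unfolding LHS_def
    proof (rule key)
      show "0 \<le> 2 / \<alpha>" using ap by simp
      fix m v
      show "uu H \<alpha> \<beta> m v \<bullet> (H *v uu H \<alpha> \<beta> m v) \<le> 2 / \<alpha> * (v \<bullet> v)"
        by (rule uu_bounds(1)[OF H_sym H_pd \<alpha>_nn \<alpha>_le \<beta>_nn \<beta>_le ap])
    qed
    also have "\<dots> = (norm (\<theta>0 - matrix_inv H *v q))^2 / (\<alpha> * real N ^ 2) + (\<alpha> * real N + \<beta>)^2 / (\<alpha> * real N) * trace C"
      using ap Npos unfolding xx by (simp add: field_simps power2_eq_square)
    finally show ?thesis .
  qed
  have B2: "LHS \<le> 4 * (norm (\<theta>0 - matrix_inv H *v q))^2 / ((\<alpha> + \<beta>) * real N) + 4 * (\<alpha> * real N + \<beta>)^2 / (\<alpha> + \<beta>) * trace C"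
    if ap: "\<alpha> + \<beta> > 0"
  proof -
    define K where "K = 2 * real N / (\<alpha> + \<beta>)"
    have KB: "uu H \<alpha> \<beta> m v \<bullet> (H *v uu H \<alpha> \<beta> m v) \<le> K * (v \<bullet> v)" if "m \<le> N" for m v
    proof -
      have "uu H \<alpha> \<beta> m v \<bullet> (H *v uu H \<alpha> \<beta> m v) \<le> (2 * real m / (\<alpha> + \<beta>)) * (v \<bullet> v)"
        using uu_bounds(2)[OF H_sym H_pd \<alpha>_nn \<alpha>_le \<beta>_nn \<beta>_le ap] .
      also have "\<dots> \<le> K * (v \<bullet> v)" unfolding K_def using that ap
        by (intro mult_right_mono divide_right_mono) auto
      finally show ?thesis .
    qed
    have "LHS \<le> (K * (x \<bullet> x) + real N * (\<alpha> * real N + \<beta>)^2 * K * trace C) / (2 * (real N)^2)"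
      unfolding LHS_def using ap Npos by (intro key KB) (auto simp: K_def)
    also have "\<dots> = (norm (\<theta>0 - matrix_inv H *v q))^2 / ((\<alpha> + \<beta>) * real N) + (\<alpha> * real N + \<beta>)^2 / (\<alpha> + \<beta>) * trace C"
      using ap Npos unfolding xx K_def by (rule alg2)
    also have "\<dots> \<le> 4 * (norm (\<theta>0 - matrix_inv H *v q))^2 / ((\<alpha> + \<beta>) * real N) + 4 * (\<alpha> * real N + \<beta>)^2 / (\<alpha> + \<beta>) * trace C"
    proof (intro add_mono)
      show "(norm (\<theta>0 - matrix_inv H *v q))^2 / ((\<alpha> + \<beta>) * real N) \<le> 4 * (norm (\<theta>0 - matrix_inv H *v q))^2 / ((\<alpha> + \<beta>) * real N)"
        using ap Npos by (intro divide_right_mono) auto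
      show "(\<alpha> * real N + \<beta>)^2 / (\<alpha> + \<beta>) * trace C \<le> 4 * (\<alpha> * real N + \<beta>)^2 / (\<alpha> + \<beta>) * trace C"
        using ap trC0 by (intro mult_right_mono divide_right_mono) auto
    qed
    finally show ?thesis .
  qed
  have LHSdef: "LHS = P.expectation (\<lambda>\<omega>. quad_obj H q (noisy_theta H (matrix_inv H *v q) \<alpha> \<beta> \<theta>0 (\<lambda>n. \<epsilon> n \<omega>) N))
           - quad_obj H q (matrix_inv H *v q)" by (simp add: LHS_def th_def ts_def)
  show ?thesis unfolding LHSdef[symmetric] using B1 B2 by auto
qed


end
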